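(* Let $t\ge 2$ and $k_1,\dots,k_t\ge 2$ be integers. If a finite simple graph $G$ contains an induced subgraph isomorphic to the vertex-disjoint union $P_{k_1}\cup P_{k_2}\cup\cdots\cup P_{k_t}$ of paths on $k_1,\dots,k_t$ vertices, then \[\mathrm{mur}(G)\ge \Big(\sum_{i=1}^t k_i\Big)-(t+1).\]
   Context: For a finite simple undirected graph $G$ on vertices $v_1,\dots,v_n$, let $A_G$ be its $(0,1)$-adjacency matrix, $D_G=\mathrm{diag}(d_1,\dots,d_n)$ with $d_i$ the degree of $v_i$, $I$ the $n\times n$ identity matrix and $J$ the $n\times n$ all-ones matrix. A universal adjacency matrix of $G$ is any matrix $\alpha A_G+\beta I+\gamma J+\delta D_G$ with real scalars $\alpha,\beta,\gamma,\delta$ and $\alpha\neq 0$. The minimum universal rank $\mathrm{mur}(G)$ is the minimum rank over all universal adjacency matrices of $G$. *)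

theory Defs
  imports "HOL-Analysis.Analysis"
begin

definition simple_graph :: "('n::finite \<Rightarrow> 'n \<Rightarrow> bool) \<Rightarrow> bool" where
  "simple_graph E \<longleftrightarrow> (\<forall>u v. E u v \<longrightarrow> E v u) \<and> (\<forall>v. \<not> E v v)"

definition adj_matrix :: "('n::finite \<Rightarrow> 'n \<Rightarrow> bool) \<Rightarrow> real^'n^'n" where
  "adj_matrix E = (\<chi> i j. if E i j then 1 else 0)"

definition degree :: "('n::finite \<Rightarrow> 'n \<Rightarrow> bool) \<Rightarrow> 'n \<Rightarrow> nat" where
  "degree E v = card {u. E v u}"

definition degree_matrix :: "('n::finite \<Rightarrow> 'n \<Rightarrow> bool) \<Rightarrow> real^'n^'n" where
  "degree_matrix E = (\<chi> i j. if i = j then real (degree E i) else 0)"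

definition ones_matrix :: "real^'n^'n" where
  "ones_matrix = (\<chi> i j. 1)"

definition universal_adj :: "('n::finite \<Rightarrow> 'n \<Rightarrow> bool) \<Rightarrow> real \<Rightarrow> real \<Rightarrow> real \<Rightarrow> real \<Rightarrow> real^'n^'n" where
  "universal_adj E \<alpha> \<beta> \<gamma> \<delta> =
     \<alpha> *\<^sub>R adj_matrix E + \<beta> *\<^sub>R mat 1 + \<gamma> *\<^sub>R ones_matrix + \<delta> *\<^sub>R degree_matrix E"

definition mur :: "('n::finite \<Rightarrow> 'n \<Rightarrow> bool) \<Rightarrow> nat" where
  "mur E = Min {rank (universal_adj E \<alpha> \<beta> \<gamma> \<delta>) | \<alpha> \<beta> \<gamma> \<delta>. \<alpha> \<noteq> 0}"

text \<open>The vertex-disjoint union of paths P_{k_1},...,P_{k_t} (ks = [k_1,...,k_t]):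
  vertices (i,j) with i < t, j < k_i; (i,j) ~ (i',j') iff i = i' and |j - j'| = 1.\<close>
definition path_union_verts :: "nat list \<Rightarrow> (nat \<times> nat) set" where
  "path_union_verts ks = {(i, j). i < length ks \<and> j < ks ! i}"

definition path_union_adj :: "(nat \<times> nat) \<Rightarrow> (nat \<times> nat) \<Rightarrow> bool" where
  "path_union_adj x y \<longleftrightarrow> fst x = fst y \<and> (snd y = snd x + 1 \<or> snd x = snd y + 1)"

definition has_induced_path_union :: "('n::finite \<Rightarrow> 'n \<Rightarrow> bool) \<Rightarrow> nat list \<Rightarrow> bool" where
  "has_induced_path_union E ks \<longleftrightarrow>
     (\<exists>f. inj_on f (path_union_verts ks) \<and>
          (\<forall>x\<in>path_union_verts ks. \<forall>y\<in>path_union_verts ks.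
              E (f x) (f y) \<longleftrightarrow> path_union_adj x y))"

end

theory Submission
  imports Defs
begin

lemma key_rank:
  fixes M :: "real^'n^'n" and F :: "nat \<times> nat \<Rightarrow> 'n" and R :: "(nat\<times>nat) set"
    and s :: "nat\<times>nat \<Rightarrow> nat\<times>nat"
    and h :: "nat\<times>nat \<Rightarrow> nat"
  assumes finR: "finite R" and c0: "c0 \<in> R" and c0max: "\<forall>r\<in>R. h r \<le> h c0"
    and hinj: "inj_on h R"
    and lowr: "\<And>r c. r \<in> R \<Longrightarrow> c \<in> R \<Longrightarrow> h r < h c \<Longrightarrow> M $ (F r) $ (F (s c)) = g"
    and diag: "\<And>c. c \<in> R \<Longrightarrow> M $ (F c) $ (F (s c)) = a + g"
    and anz: "a \<noteq> 0"
  shows "card R - 1 \<le> rank M"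
proof -
  define C where "C = R - {c0}"
  define v where "v c = M *v (axis (F (s c)) 1 - axis (F (s c0)) 1)" for c
  have ent: "v c $ x = M $ x $ (F (s c)) - M $ x $ (F (s c0))" for c x
    unfolding v_def matrix_vector_mult_diff_distrib matrix_vector_mult_basis
    by (simp add: column_def)
  have finC: "finite C" using finR by (simp add: C_def)
  have CR: "C \<subseteq> R" by (auto simp: C_def)
  have rc0: "h r < h c0" if "r \<in> C" for r
    using that c0max c0 hinj unfolding inj_on_def C_def by (metis DiffE insertI1 le_neq_implies_less)
  have z: "v c $ F r = 0" if "r \<in> C" "c \<in> C" "h r < h c" for r c
  proof -
    have "r \<in> R" "c \<in> R" using that CR by auto
    then show ?thesis using ent[of c "F r"] lowr[of r c] lowr[of r c0] that c0 rc0[of r] by simp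
  qed
  have d: "v c $ F c = a" if "c \<in> C" for c
  proof -
    have "c \<in> R" using that CR by auto
    then show ?thesis using ent[of c "F c"] diag[of c] lowr[of c c0] that c0 rc0[of c] by simp
  qed
  have inj: "inj_on v C"
  proof (rule inj_onI)
    fix c c' assume cc: "c \<in> C" "c' \<in> C" "v c = v c'"
    show "c = c'"
    proof (rule ccontr)
      assume ne: "c \<noteq> c'"
      have hne: "h c \<noteq> h c'" using ne hinj cc CR unfolding inj_on_def by blast
      show False
      proof (cases "h c < h c'")
        case True
        then show ?thesis using z[of c c'] d[of c] cc anz by auto
      next
        case False
        then have "h c' < h c" using hne by auto
        then show ?thesis using z[of c' c] d[of c'] cc anz by auto
      qed
    qed
  qed
  have ind: "independent (v ` C)"
  proof (rule independent_if_scalars_zero)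
    show "finite (v ` C)" using finC by simp
  next
    fix f y assume sum0: "(\<Sum>x\<in>v ` C. f x *\<^sub>R x) = 0" and y: "y \<in> v ` C"
    define b where "b c = f (v c)" for c
    have s0: "(\<Sum>c\<in>C. b c *\<^sub>R v c) = 0"
      using sum0 by (simp add: sum.reindex[OF inj] b_def)
    have "\<forall>c\<in>C. b c = 0"
    proof
      fix c assume "c \<in> C"
      then show "b c = 0"
      proof (induction "h c" arbitrary: c rule: less_induct)
        case (less c)
        have "0 = (\<Sum>c'\<in>C. b c' *\<^sub>R v c') $ F c" using s0 by simp
        also have "\<dots> = (\<Sum>c'\<in>C. b c' * (v c' $ F c))" by (simp add: sum_component)
        also have "\<dots> = b c * (v c $ F c) + (\<Sum>c'\<in>C - {c}. b c' * (v c' $ F c))"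
          using less.prems finC by (simp add: sum.remove)
        also have "(\<Sum>c'\<in>C - {c}. b c' * (v c' $ F c)) = 0"
        proof (rule sum.neutral, rule ballI)
          fix c' assume c': "c' \<in> C - {c}"
          have hne: "h c' \<noteq> h c" using c' less.prems hinj CR unfolding inj_on_def by blast
          show "b c' * (v c' $ F c) = 0"
          proof (cases "h c' < h c")
            case True then show ?thesis using less c' by auto
          next
            case False then have "h c < h c'" using hne by auto
            then show ?thesis using z[of c c'] less.prems c' by auto
          qed
        qed
        finally show ?case using d[OF less.prems] anz by simp
      qed
    qed
    then show "f y = 0" using y b_def by auto
  qed
  have sub: "v ` C \<subseteq> range (\<lambda>x. M *v x)" unfolding v_def by auto
  have "card (v ` C) \<le> dim (range (\<lambda>x. M *v x))"
    by (rule independent_card_le_dim[OF sub ind])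
  moreover have "card (v ` C) = card R - 1"
    using card_image[OF inj] c0 finR by (simp add: C_def)
  ultimately show ?thesis by (simp add: rank_dim_range)
qed


lemma hlt:
  fixes K i j i' j' :: nat
  assumes "j < K" "j' < K"
  shows "i*K + j < i'*K + j' \<longleftrightarrow> (i < i' \<or> i = i' \<and> j < j')"
proof
  assume a: "i*K + j < i'*K + j'"
  show "i < i' \<or> i = i' \<and> j < j'"
  proof (rule ccontr)
    assume "\<not> ?thesis"
    then have "i' < i \<or> (i = i' \<and> j' \<le> j)" by auto
    then show False
    proof
      assume "i' < i"
      then have "Suc i' * K \<le> i * K" using mult_le_mono1[of "Suc i'" i K] by linarith
      then show False using a assms by simp
    qed (use a in auto)
  qed
next
  assume "i < i' \<or> i = i' \<and> j < j'"
  then show "i*K + j < i'*K + j'"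
  proof
    assume "i < i'"
    then have "Suc i * K \<le> i' * K" using mult_le_mono1[of "Suc i" i' K] by linarith
    then show ?thesis using assms by simp
  qed auto
qed

lemma heq:
  fixes K i j i' j' :: nat
  assumes "j < K" "j' < K" "i*K + j = i'*K + j'"
  shows "i = i' \<and> j = j'"
  using hlt[OF assms(1,2), of i i'] hlt[OF assms(2,1), of i' i] assms(3)
  by (metis less_irrefl nat_neq_iff)

theorem lemma8:
  fixes E :: "'n::finite \<Rightarrow> 'n \<Rightarrow> bool" and ks :: "nat list"
  assumes "simple_graph E"
    and "length ks \<ge> 2"
    and "\<forall>k\<in>set ks. k \<ge> 2"
    and "has_induced_path_union E ks"
  shows "int (mur E) \<ge> int (sum_list ks) - (int (length ks) + 1)"
proof -
  define t where "t = length ks"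
  define P where "P = path_union_verts ks"
  obtain f where finj: "inj_on f P" and fadj: "\<forall>x\<in>P. \<forall>y\<in>P. E (f x) (f y) \<longleftrightarrow> path_union_adj x y"
    using assms(4) unfolding has_induced_path_union_def P_def by blast
  have k2: "ks ! i \<ge> 2" if "i < t" for i using assms(3) that t_def by auto
  define K where "K = sum_list ks"
  define R where "R = {(i,j). i < t \<and> Suc j < ks ! i}"
  define s where "s = (\<lambda>(i::nat,j::nat). (i, Suc j))"
  define c0 where "c0 = (t - 1, ks ! (t - 1) - 2)"
  define h where "h = (\<lambda>(i::nat,j::nat). i * K + j)"
  have jK: "j < K" if "(i,j) \<in> R" for i j
  proof -
    have "ks ! i \<le> K" using that elem_le_sum_list[of i ks] unfolding R_def K_def t_def by auto
    then show ?thesis using that unfolding R_def by auto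
  qed
  have RP: "r \<in> P" "s r \<in> P" if "r \<in> R" for r
    using that unfolding R_def P_def path_union_verts_def s_def t_def by auto
  have t1: "t \<ge> 1" using assms(2) t_def by simp
  have c0R: "c0 \<in> R" using k2[of "t-1"] t1 unfolding c0_def R_def by auto
  have finR: "finite R"
  proof -
    have "R \<subseteq> {..<t} \<times> {..<K}" using jK unfolding R_def by auto
    then show ?thesis by (rule finite_subset) simp
  qed
  have hinj: "inj_on h R"
  proof (rule inj_onI)
    fix x y assume xy: "x \<in> R" "y \<in> R" "h x = h y"
    obtain i j where ij: "x = (i,j)" by fastforce
    obtain i' j' where ij': "y = (i',j')" by fastforce
    have "i*K + j = i'*K + j'" using xy(3) unfolding ij ij' h_def by simp
    then have "i = i' \<and> j = j'" using heq jK xy(1,2) unfolding ij ij' by blast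
    then show "x = y" unfolding ij ij' by simp
  qed
  have c0max: "\<forall>r\<in>R. h r \<le> h c0"
  proof
    fix r assume r: "r \<in> R"
    obtain i j where ij: "r = (i,j)" by fastforce
    have j1: "j < K" using jK r ij by blast
    have j2: "ks ! (t - 1) - 2 < K" using jK c0R unfolding c0_def by blast
    have it: "i < t" "Suc j < ks ! i" using r ij unfolding R_def by auto
    have "i < t - 1 \<or> i = t - 1 \<and> j < ks ! (t - 1) - 2 \<or> i = t - 1 \<and> j = ks ! (t - 1) - 2"
      using it by (cases "i = t - 1") auto
    then have "h r < h c0 \<or> h r = h c0"
      using hlt[OF j1 j2, of i "t-1"] unfolding h_def c0_def ij by auto
    then show "h r \<le> h c0" by linarith
  qed
  have cardR: "int (card R) = int K - int t"
  proof -
    have "R = Sigma {..<t} (\<lambda>i. {..<ks ! i - 1})" unfolding R_def by auto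
    then have "card R = (\<Sum>i<t. ks ! i - 1)" by simp
    then have "int (card R) = (\<Sum>i<t. int (ks ! i) - 1)"
    proof -
      have "int (ks ! i - 1) = int (ks ! i) - 1" if "i < t" for i
        using k2[OF that] by linarith
      then show ?thesis using \<open>card R = _\<close> by (simp add: of_nat_sum)
    qed
    also have "\<dots> = (\<Sum>i<t. int (ks ! i)) - int t" by (simp add: sum_subtractf)
    also have "(\<Sum>i<t. int (ks ! i)) = int K"
      unfolding K_def sum_list_sum_nth t_def by (simp add: atLeast0LessThan)
    finally show ?thesis .
  qed
  have bound: "card R - 1 \<le> rank (universal_adj E a b g d)" if anz: "a \<noteq> 0" for a b g d
  proof -
    define M where "M = universal_adj E a b g d"
    have ent: "M $ x $ y = a * (if E x y then 1 else 0) + b * (if x = y then 1 else 0) + g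
                + d * (if x = y then real (degree E x) else 0)" for x y
      unfolding M_def universal_adj_def adj_matrix_def ones_matrix_def degree_matrix_def
      by (simp add: mat_def)
    have lowr: "M $ (f r) $ (f (s c)) = g" if "r \<in> R" "c \<in> R" "h r < h c" for r c
    proof -
      obtain i j where ij: "r = (i,j)" by fastforce
      obtain i' j' where ij': "c = (i',j')" by fastforce
      have "i < i' \<or> i = i' \<and> j < j'"
        using hlt[of j K j' i i'] jK that ij ij' unfolding h_def by auto
      then have n1: "r \<noteq> s c" and n2: "\<not> path_union_adj r (s c)"
        unfolding ij ij' s_def path_union_adj_def by auto
      have "f r \<noteq> f (s c)" using n1 finj RP that unfolding inj_on_def by blast
      moreover have "\<not> E (f r) (f (s c))" using n2 fadj RP that by blast
      ultimately show ?thesis using ent by simp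
    qed
    have diag: "M $ (f c) $ (f (s c)) = a + g" if "c \<in> R" for c
    proof -
      obtain i j where ij: "c = (i,j)" by fastforce
      have n1: "c \<noteq> s c" and n2: "path_union_adj c (s c)"
        unfolding ij s_def path_union_adj_def by auto
      have "f c \<noteq> f (s c)" using n1 finj RP that unfolding inj_on_def by blast
      moreover have "E (f c) (f (s c))" using n2 fadj RP that by blast
      ultimately show ?thesis using ent by simp
    qed
    show ?thesis unfolding M_def[symmetric]
      by (rule key_rank[where M=M and F=f and s=s and g=g and a=a, OF finR c0R c0max hinj lowr diag anz])
  qed
  define S where "S = {rank (universal_adj E \<alpha> \<beta> \<gamma> \<delta>) | \<alpha> \<beta> \<gamma> \<delta>. \<alpha> \<noteq> 0}"
  have "S \<subseteq> {..CARD('n)}"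
  proof
    fix x assume "x \<in> S"
    then obtain a b g d where "x = rank (universal_adj E a b g d)" unfolding S_def by blast
    then have "x \<le> min CARD('n) CARD('n)" using rank_bound by metis
    then show "x \<in> {..CARD('n)}" by simp
  qed
  then have finS: "finite S" by (rule finite_subset) simp
  have "rank (universal_adj E 1 0 0 0) \<in> S" unfolding S_def by (intro CollectI exI conjI) auto
  then have neS: "S \<noteq> {}" by auto
  have "mur E \<in> S" unfolding mur_def S_def[symmetric] using finS neS by (rule Min_in)
  then have "card R - 1 \<le> mur E" unfolding S_def using bound by auto
  then have "int (card R) - 1 \<le> int (mur E)" by linarith
  then show ?thesis using cardR unfolding K_def t_def by linarith
qed

end
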